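(* Let $\kappa>0$ and $0<\alpha\le2$, and let $d_{\kappa,\alpha}(p,q)=\|p^{-1}\cdot q\|_{\kappa,\alpha}$ where $\|(x,y,z)\|_{\kappa,\alpha}=\kappa\sqrt{x^2+y^2}+\big((x^2+y^2)^2+4\alpha^2z^2\big)^{1/4}$. Then BCP does not hold for $d_{\kappa,\alpha}$ on $\mathbb H$.
   Context: $\mathbb H=\mathbb R^3$ with group law $(x,y,z)\cdot(x',y',z')=(x+x',y+y',z+z'+\tfrac12(xy'-yx'))$. BCP holds for $d$ if there is $N\geq1$ such that for every bounded $A$ and every family $\mathcal B$ of closed balls with each point of $A$ the center of some ball of $\mathcal B$, some subfamily $\mathcal F\subset\mathcal B$ satisfies $\chi_A\le\sum_{B\in\mathcal F}\chi_B\le N$. *)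

theory Defs
  imports "HOL-Analysis.Analysis"
begin

type_synonym heis = "real \<times> real \<times> real"

definition heis_mult :: "heis \<Rightarrow> heis \<Rightarrow> heis" where
  "heis_mult p q = (case p of (x, y, z) \<Rightarrow> case q of (x', y', z') \<Rightarrow>
      (x + x', y + y', z + z' + (1/2) * (x * y' - y * x')))"

definition heis_inv :: "heis \<Rightarrow> heis" where
  "heis_inv p = (case p of (x, y, z) \<Rightarrow> (-x, -y, -z))"

definition ka_norm :: "real \<Rightarrow> real \<Rightarrow> heis \<Rightarrow> real" where
  "ka_norm \<kappa> \<alpha> p = (case p of (x, y, z) \<Rightarrow>
      \<kappa> * sqrt (x^2 + y^2) + root 4 ((x^2 + y^2)^2 + 4 * \<alpha>^2 * z^2))"

definition ka_dist :: "real \<Rightarrow> real \<Rightarrow> heis \<Rightarrow> heis \<Rightarrow> real" where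
  "ka_dist \<kappa> \<alpha> p q = ka_norm \<kappa> \<alpha> (heis_mult (heis_inv p) q)"

definition dcball :: "('a \<Rightarrow> 'a \<Rightarrow> real) \<Rightarrow> 'a \<Rightarrow> real \<Rightarrow> 'a set" where
  "dcball d c r = {p. d c p \<le> r}"

definition dbounded :: "('a \<Rightarrow> 'a \<Rightarrow> real) \<Rightarrow> 'a set \<Rightarrow> bool" where
  "dbounded d A \<longleftrightarrow> (\<exists>c R. A \<subseteq> dcball d c R)"

text \<open>The pointwise sum of indicator functions
  of the balls in F is the number of balls of F containing the point, so
  chi_A \<le> sum \<le> N means: every point of A lies in some ball of F, and every
  point lies in at most N (in particular finitely many) balls of F.\<close>
definition BCP :: "('a \<Rightarrow> 'a \<Rightarrow> real) \<Rightarrow> bool" where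
  "BCP d \<longleftrightarrow> (\<exists>N::nat. N \<ge> 1 \<and>
     (\<forall>A \<B>. dbounded d A
        \<longrightarrow> (\<forall>B\<in>\<B>. \<exists>c r. r > 0 \<and> B = dcball d c r)
        \<longrightarrow> (\<forall>a\<in>A. \<exists>r>0. dcball d a r \<in> \<B>)
        \<longrightarrow> (\<exists>\<F>\<subseteq>\<B>. (\<forall>p\<in>A. \<exists>B\<in>\<F>. p \<in> B) \<and>
               (\<forall>p. finite {B\<in>\<F>. p \<in> B} \<and> card {B\<in>\<F>. p \<in> B} \<le> N))))"

end

theory Submission
  imports Defs
begin

lemma root4_ge: assumes "0 \<le> w" "0 \<le> x" shows "w \<le> root 4 (x + w^4)"
proof -
  have "root 4 (w^4) \<le> root 4 (x + w^4)" using assms by (simp)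
  moreover have "root 4 (w^4) = w" using assms by (simp add: real_root_power_cancel)
  ultimately show ?thesis by simp
qed
lemma root4_le: assumes "0 \<le> s" "0 \<le> a" shows "root 4 (s^4 + a^4) \<le> s + a"
proof -
  have "s^4 + a^4 \<le> (s+a)^4" using assms
    by (simp add: power4_eq_xxxx algebra_simps)
  hence "root 4 (s^4 + a^4) \<le> root 4 ((s+a)^4)" by simp
  also have "\<dots> = s + a" using assms by (simp add: real_root_power_cancel)
  finally show ?thesis .
qed


lemma wfacts:
  fixes ai aj :: real
  assumes "0 < ai" "ai < aj"
  shows "0 \<le> sqrt (aj^2 - ai^2)" "(sqrt (aj^2 - ai^2))^2 = aj^2 - ai^2"
    "(sqrt (aj^2 - ai^2))^4 = (aj^2-ai^2)^2" "sqrt (aj^2 - ai^2) \<le> aj"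
    "aj - ai \<le> sqrt (aj^2 - ai^2)"
proof -
  have p: "ai^2 < aj^2" using assms by (simp add: power_strict_mono)
  show w0: "0 \<le> sqrt (aj^2 - ai^2)" using p by simp
  show ww: "(sqrt (aj^2 - ai^2))^2 = aj^2 - ai^2" using p by simp
  then show "(sqrt (aj^2 - ai^2))^4 = (aj^2-ai^2)^2"
    by (metis power_mult numeral_times_numeral num_double)
  have "sqrt (aj^2 - ai^2) \<le> sqrt (aj^2)" by (rule real_sqrt_le_mono) simp
  then show "sqrt (aj^2 - ai^2) \<le> aj" using assms by simp
  have "(aj - ai)^2 \<le> aj^2 - ai^2" using assms by (simp add: power2_eq_square algebra_simps)
  thus "aj - ai \<le> sqrt (aj^2 - ai^2)" using assms by (simp add: real_le_rsqrt)
qed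


lemma keyA:
  fixes k al xi xj ai aj u zz :: real
  assumes k: "k > 0" and al: "al > 0" and xi: "xi > 0" and xj: "xj \<ge> 0" and ai: "0 < ai" and aij: "ai < aj"
    and h1: "(2*k+1)*xj \<le> k*xi/2" and h2: "2*ai^2 < k*xi*aj"
    and hu: "u^4 = (xi - xj)^4" "\<bar>u\<bar> = \<bar>xi - xj\<bar>" and hz: "4*al^2*zz^2 = (aj^2 - ai^2)^2"
  shows "k*\<bar>u\<bar> + root 4 (u^4 + 4*al^2*zz^2) > k*\<bar>xj\<bar> + root 4 (xj^4 + 4*al^2*(aj^2/(2*al))^2)"
proof -
  define w where "w = sqrt (aj^2 - ai^2)"
  note wf = wfacts[OF ai aij, folded w_def]
  have r1: "w \<le> root 4 (u^4 + 4*al^2*zz^2)"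
    using root4_ge[OF wf(1), of "u^4"] wf(3) hz by simp
  have e: "4*al^2*(aj^2/(2*al))^2 = aj^4" using al by (simp add: power2_eq_square power4_eq_xxxx field_simps)
  have r2: "root 4 (xj^4 + 4*al^2*(aj^2/(2*al))^2) \<le> xj + aj"
    unfolding e using root4_le xj ai aij by simp
  have "(aj - w)*aj \<le> (aj-w)*(aj+w)" using wf(1,4) by (simp add: mult_left_mono)
  also have "\<dots> = ai^2" using wf(2) by (simp add: algebra_simps power2_eq_square)
  finally have h3: "(aj - w)*aj \<le> ai^2" .
  have "ai^2 < k*xi/2 * aj" using h2 by simp
  hence "(aj - w)*aj < (k*xi/2)*aj" using h3 by linarith
  hence r3: "aj - w < k*xi/2" using ai aij by (simp add: mult_less_cancel_right)
  have "\<bar>u\<bar> \<ge> xi - xj" using hu(2) by simp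
  hence r4: "k*\<bar>u\<bar> \<ge> k*(xi - xj)" using k by (simp add: mult_left_mono)
  have r5: "k*\<bar>xj\<bar> = k*xj" using xj by simp
  have r6: "k*(xi-xj) - k*xj - xj \<ge> k*xi/2" using h1 by (simp add: algebra_simps)
  show ?thesis using r1 r2 r3 r4 r5 r6 by linarith
qed

lemma keyB:
  fixes k al xi ai aj u zz :: real
  assumes k: "k > 0" and al: "al > 0" and xi: "xi > 0" "xi \<le> 1" and ai: "0 < ai" and aij: "ai < aj"
    and h: "2*ai + k + 1 < aj"
    and hz: "4*al^2*zz^2 = (aj^2 - ai^2)^2"
  shows "k*\<bar>u\<bar> + root 4 (u^4 + 4*al^2*zz^2) > k*\<bar>xi\<bar> + root 4 (xi^4 + 4*al^2*(ai^2/(2*al))^2)"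
proof -
  define w where "w = sqrt (aj^2 - ai^2)"
  note wf = wfacts[OF ai aij, folded w_def]
  have r1: "w \<le> root 4 (u^4 + 4*al^2*zz^2)"
    using root4_ge[OF wf(1), of "u^4"] wf(3) hz by simp
  have e: "4*al^2*(ai^2/(2*al))^2 = ai^4" using al by (simp add: power2_eq_square power4_eq_xxxx field_simps)
  have r2: "root 4 (xi^4 + 4*al^2*(ai^2/(2*al))^2) \<le> xi + ai"
    unfolding e using root4_le xi ai by simp
  have r3: "k*\<bar>u\<bar> \<ge> 0" using k by simp
  have r4: "k*\<bar>xi\<bar> \<le> k" using k xi by simp
  show ?thesis using r1 r2 r3 r4 wf(5) h xi by linarith
qed


fun xseq :: "real \<Rightarrow> nat \<Rightarrow> real" where
  "xseq k 0 = 1"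
| "xseq k (Suc i) = xseq k i * k / (2*(2*k+1))"

fun aseq :: "real \<Rightarrow> nat \<Rightarrow> real" where
  "aseq k 0 = 1"
| "aseq k (Suc i) = 2*(aseq k i)^2/(k * xseq k i) + 2*aseq k i + k + 2"

lemma xseq_pos: "k > 0 \<Longrightarrow> xseq k i > 0"
  by (induction i) auto

lemma xseq_Suc_le: assumes "k > 0" shows "xseq k (Suc i) \<le> xseq k i"
proof -
  have "k / (2*(2*k+1)) \<le> 1" using assms by (simp add: field_simps)
  hence "xseq k i * (k / (2*(2*k+1))) \<le> xseq k i * 1"
    using xseq_pos[OF assms, of i] by (intro mult_left_mono) auto
  thus ?thesis by simp
qed

lemma xseq_le1: "k > 0 \<Longrightarrow> xseq k i \<le> 1"
proof (induction i)
  case 0 then show ?case by simp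
next
  case (Suc i) then show ?case using xseq_Suc_le[of k i] by linarith
qed

lemma xseq_mono: assumes "k > 0" "i \<le> j" shows "xseq k j \<le> xseq k i"
  using assms(2)
proof (induction j)
  case 0 then show ?case by simp
next
  case (Suc j)
  then show ?case using xseq_Suc_le[OF assms(1), of j] by (cases "i = Suc j") auto
qed

lemma aseq_pos: "k > 0 \<Longrightarrow> aseq k i > 0"
proof (induction i)
  case 0 then show ?case by simp
next
  case (Suc i)
  have "2*(aseq k i)^2/(k * xseq k i) \<ge> 0" using Suc xseq_pos[of k i] by simp
  then show ?case using Suc by simp
qed

lemma aseq_Suc: "k > 0 \<Longrightarrow> aseq k i < aseq k (Suc i)"
proof -
  assume k: "k > 0"
  have "2*(aseq k i)^2/(k * xseq k i) \<ge> 0" using k xseq_pos[of k i] by simp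
  then show ?thesis using aseq_pos[OF k, of i] k by simp
qed

lemma aseq_mono: assumes "k > 0" "i \<le> j" shows "aseq k i \<le> aseq k j"
  using assms(2)
proof (induction j)
  case 0 then show ?case by simp
next
  case (Suc j)
  then show ?case using aseq_Suc[OF assms(1), of j] by (cases "i = Suc j") auto
qed

definition pt :: "real \<Rightarrow> real \<Rightarrow> nat \<Rightarrow> heis" where
  "pt k al i = (xseq k i, 0, (aseq k i)^2/(2*al))"

lemma dist_form: "ka_dist k al (x,0,z) (x',0,z') = k*\<bar>x'-x\<bar> + root 4 ((x'-x)^4 + 4*al^2*(z'-z)^2)"
proof -
  have "ka_dist k al (x,0,z) (x',0,z') = k * sqrt((-x+x')^2) + root 4 (((-x+x')^2)^2 + 4*al^2*(-z+z')^2)"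
    by (simp add: ka_dist_def ka_norm_def heis_mult_def heis_inv_def)
  also have "\<dots> = k*\<bar>x'-x\<bar> + root 4 ((x'-x)^4 + 4*al^2*(z'-z)^2)"
    by (simp add: power_mult[symmetric])
  finally show ?thesis .
qed

lemma norm_form: "ka_norm k al (x,0,z) = k*\<bar>x\<bar> + root 4 (x^4 + 4*al^2*z^2)"
  by (simp add: ka_norm_def power_mult[symmetric])

lemma sep_lt:
  assumes k: "k > 0" and al: "al > 0" and ij: "i < j"
  shows "ka_dist k al (pt k al i) (pt k al j) > ka_norm k al (pt k al i)"
        "ka_dist k al (pt k al j) (pt k al i) > ka_norm k al (pt k al j)"
proof -
  let ?xi = "xseq k i" and ?xj = "xseq k j" and ?ai = "aseq k i" and ?aj = "aseq k j"
  have xi: "?xi > 0" "?xi \<le> 1" using xseq_pos[OF k] xseq_le1[OF k] by auto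
  have xj: "?xj \<ge> 0" using xseq_pos[OF k, of j] by simp
  have ai: "?ai > 0" using aseq_pos[OF k] by auto
  have aS: "aseq k (Suc i) \<le> ?aj" using aseq_mono[OF k, of "Suc i" j] ij by simp
  have aij: "?ai < ?aj" using aseq_Suc[OF k, of i] aS by simp
  have xS: "?xj \<le> xseq k (Suc i)" using xseq_mono[OF k, of "Suc i" j] ij by simp
  have h1: "(2*k+1)*?xj \<le> k*?xi/2"
  proof -
    have "(2*k+1)*?xj \<le> (2*k+1)*xseq k (Suc i)" using xS k by (intro mult_left_mono) auto
    also have "\<dots> = k*?xi/2" using k by (simp add: field_simps)
    finally show ?thesis .
  qed
  have h2: "2*?ai^2 < k*?xi*?aj"
  proof -
    have "2*?ai^2/(k*?xi) < ?aj" using aS ai xi k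
      by (smt (verit) aseq.simps(2))
    thus ?thesis using k xi by (simp add: field_simps)
  qed
  have h3: "2*?ai + k + 1 < ?aj"
  proof -
    have "2*?ai^2/(k*?xi) \<ge> 0" using k xi by simp
    thus ?thesis using aS by simp
  qed
  have hz1: "4*al^2*((?aj^2/(2*al)) - (?ai^2/(2*al)))^2 = (?aj^2 - ?ai^2)^2"
    using al by (simp add: power2_eq_square field_simps)
  have hz2: "4*al^2*((?ai^2/(2*al)) - (?aj^2/(2*al)))^2 = (?aj^2 - ?ai^2)^2"
    using al by (simp add: power2_eq_square field_simps)
  show "ka_dist k al (pt k al i) (pt k al j) > ka_norm k al (pt k al i)"
    unfolding pt_def dist_form norm_form
    by (rule keyB[OF k al xi ai aij h3 hz1])
  have hu: "(?xi - ?xj)^4 = (?xi - ?xj)^4" "\<bar>?xi - ?xj\<bar> = \<bar>?xi - ?xj\<bar>" by auto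
  show "ka_dist k al (pt k al j) (pt k al i) > ka_norm k al (pt k al j)"
    unfolding pt_def dist_form norm_form
    by (rule keyA[OF k al xi(1) xj ai aij h1 h2 hu hz2])
qed

lemma sep:
  assumes k: "k > 0" and al: "al > 0" and ij: "i \<noteq> j"
  shows "ka_dist k al (pt k al i) (pt k al j) > ka_norm k al (pt k al i)"
  using sep_lt[OF k al] ij by (cases "i < j") (auto simp: not_less_iff_gr_or_eq)



lemma norm_pt_pos: "k > 0 \<Longrightarrow> ka_norm k al (pt k al i) > 0"
proof -
  assume k: "k > 0"
  have "k * \<bar>xseq k i\<bar> > 0" using k xseq_pos[OF k, of i] by simp
  moreover have "root 4 ((xseq k i)^4 + 4*al^2*((aseq k i)^2/(2*al))^2) \<ge> 0"
    by (intro real_root_ge_zero) simp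
  ultimately show ?thesis unfolding pt_def norm_form by linarith
qed

lemma dist_self: "ka_dist k al (pt k al i) (pt k al i) = 0"
  unfolding pt_def dist_form by simp

lemma dist_0: "ka_dist k al (0,0,0) (pt k al i) = ka_norm k al (pt k al i)"
  unfolding pt_def dist_form norm_form by simp

lemma dist_0': "ka_dist k al (pt k al i) (0,0,0) = ka_norm k al (pt k al i)"
  unfolding pt_def dist_form norm_form by (simp add: power2_eq_square power4_eq_xxxx)

theorem mainTheorem8:
  fixes \<kappa> \<alpha> :: real
  assumes "\<kappa> > 0" and "0 < \<alpha>" and "\<alpha> \<le> 2"
  shows "\<not> BCP (ka_dist \<kappa> \<alpha>)"
proof
  assume "BCP (ka_dist \<kappa> \<alpha>)"
  then obtain N :: nat where hN: "\<forall>A \<B>. dbounded (ka_dist \<kappa> \<alpha>) A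
        \<longrightarrow> (\<forall>B\<in>\<B>. \<exists>c r. r > 0 \<and> B = dcball (ka_dist \<kappa> \<alpha>) c r)
        \<longrightarrow> (\<forall>a\<in>A. \<exists>r>0. dcball (ka_dist \<kappa> \<alpha>) a r \<in> \<B>)
        \<longrightarrow> (\<exists>\<F>\<subseteq>\<B>. (\<forall>p\<in>A. \<exists>B\<in>\<F>. p \<in> B) \<and>
               (\<forall>p. finite {B\<in>\<F>. p \<in> B} \<and> card {B\<in>\<F>. p \<in> B} \<le> N))"
    unfolding BCP_def by blast
  define d where "d = ka_dist \<kappa> \<alpha>"
  define P where "P = pt \<kappa> \<alpha>"
  define nr where "nr i = ka_norm \<kappa> \<alpha> (P i)" for i
  define ball where "ball i = dcball d (P i) (nr i)" for i
  define n where "n = Suc N"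
  define A where "A = P ` {..<n}"
  define BB where "BB = ball ` {..<n}"
  have nrpos: "nr i > 0" for i unfolding nr_def P_def using norm_pt_pos[OF assms(1)] by blast
  have sepP: "P j \<notin> ball i" if "i \<noteq> j" for i j
    using sep[OF assms(1,2) that] unfolding ball_def dcball_def d_def nr_def P_def by auto
  have selfP: "P i \<in> ball i" for i
    using nrpos[of i] unfolding ball_def dcball_def d_def P_def by (simp add: dist_self)
  have zeroP: "(0,0,0) \<in> ball i" for i
    unfolding ball_def dcball_def d_def P_def nr_def by (simp add: dist_0')
  have bd: "dbounded d A"
    unfolding dbounded_def
  proof (intro exI)
    show "A \<subseteq> dcball d (0,0,0) (\<Sum>i<n. nr i)"
    proof
      fix p assume "p \<in> A"
      then obtain i where i: "i < n" "p = P i" unfolding A_def by auto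
      have "nr i \<le> (\<Sum>i<n. nr i)"
        by (rule member_le_sum) (use i nrpos in \<open>auto intro: less_imp_le\<close>)
      then show "p \<in> dcball d (0,0,0) (\<Sum>i<n. nr i)"
        unfolding dcball_def d_def using i by (simp add: dist_0 P_def nr_def)
    qed
  qed
  have h2: "\<forall>B\<in>BB. \<exists>c r. r > 0 \<and> B = dcball d c r"
    unfolding BB_def ball_def using nrpos by blast
  have h3: "\<forall>a\<in>A. \<exists>r>0. dcball d a r \<in> BB"
    unfolding A_def BB_def ball_def using nrpos by blast
  obtain F where F: "F \<subseteq> BB" "\<forall>p\<in>A. \<exists>B\<in>F. p \<in> B"
      "\<forall>p. finite {B\<in>F. p \<in> B} \<and> card {B\<in>F. p \<in> B} \<le> N"
    using hN[rule_format, of A BB] bd h2 h3 unfolding d_def by blast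
  have sub: "BB \<subseteq> {B\<in>F. (0,0,0) \<in> B}"
  proof
    fix B assume "B \<in> BB"
    then obtain i where i: "i < n" "B = ball i" unfolding BB_def by auto
    have "P i \<in> A" using i unfolding A_def by auto
    then obtain B' where B': "B' \<in> F" "P i \<in> B'" using F(2) by blast
    then obtain j where "B' = ball j" using F(1) unfolding BB_def by auto
    with B' sepP have "j = i" by blast
    with B' \<open>B' = ball j\<close> i zeroP show "B \<in> {B\<in>F. (0,0,0) \<in> B}" by auto
  qed
  have inj: "inj_on ball {..<n}"
  proof (rule inj_onI)
    fix i j assume "i \<in> {..<n}" "j \<in> {..<n}" "ball i = ball j"
    then show "i = j" using selfP[of j] sepP[of i j] by auto
  qed
  have "n = card BB" unfolding BB_def using card_image[OF inj] by simp
  also have "\<dots> \<le> card {B\<in>F. (0,0,0) \<in> B}"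
    using F(3) sub by (intro card_mono) auto
  also have "\<dots> \<le> N" using F(3) by blast
  finally show False unfolding n_def by simp
qed

end
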